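(* Let $w$ be a weight on $\mathbb{N}_0$ satisfying the discrete Pearson equation $\theta(k+1)w(k+1)=\sigma(k)w(k)$ for all $k\in\mathbb{N}_0$, with $\theta,\sigma$ polynomials and $\theta(0)=0$, and with the setting of the context. Then for all $z\in\mathbb{C}\setminus\mathbb{Z}$, $$\theta(z)Q(z)-\Psi^\top H^{-1}Q(z-1)=\sum_{k=0}^\infty P(k)\frac{\theta(z)-\theta(k)}{z-k}w(k),$$ $$\sigma(z)Q(z)-\Psi H^{-1}Q(z+1)=\sum_{k=0}^\infty P(k)\frac{\sigma(z)-\sigma(k)}{z-k}w(k).$$
   Context: The weight $w$ takes values $w(k)$ at $k\in\mathbb{N}_0$ with $\sum_kk^n|w(k)|<\infty$ for all $n$; moments $\rho_n=\sum_kk^nw(k)$, moment matrix $G=(\rho_{n+m})_{n,m\ge0}$ with all leading principal minors nonzero, so $G=S^{-1}HS^{-\top}$ with $S$ lower unitriangular and $H=\operatorname{diag}(H_0,H_1,\dots)$. $P(z)=S\chi(z)$, $\chi(z)=(1,z,z^2,\dots)^\top$, is the vector of monic orthogonal polynomials $P_n$ (with $\sum_kP_n(k)P_m(k)w(k)=\delta_{n,m}H_n$), and $Q(z)$ is the vector of second kind functions $Q_n(z)=\sum_{k=0}^\infty\frac{P_n(k)w(k)}{z-k}$. $\Lambda$ is the shift matrix (ones on the first superdiagonal), $J=S\Lambda S^{-1}$ the Jacobi matrix, $B$ the lower Pascal matrix $B_{n,m}=\binom nm$, $\Pi:=SBS^{-1}$ (so $P(z+1)=\Pi P(z)$). The Laguerre--Freud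 structure matrix is $\Psi:=\Pi^{-1}\theta(J)H$; under the Pearson equation it is known that also $\Psi=H\sigma(J^\top)\Pi^\top$, and $\Psi$ is banded. *)

theory Defs
  imports "HOL-Computational_Algebra.Polynomial" "Jordan_Normal_Form.Determinant"
begin

text \<open>Products are given by the (possibly infinite) series of the entrywise products;
  for all products occurring below (involving lower triangular / Hessenberg factors)
  only finitely many terms are nonzero.\<close>

type_synonym imat = "nat \<Rightarrow> nat \<Rightarrow> complex"
type_synonym ivec = "nat \<Rightarrow> complex"

definition mmult :: "imat \<Rightarrow> imat \<Rightarrow> imat" where
  "mmult A B = (\<lambda>i j. \<Sum>k. A i k * B k j)"

definition mvmult :: "imat \<Rightarrow> ivec \<Rightarrow> ivec" where
  "mvmult A v = (\<lambda>i. \<Sum>k. A i k * v k)"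

definition mtrans :: "imat \<Rightarrow> imat" where
  "mtrans A = (\<lambda>i j. A j i)"

definition idm :: imat where
  "idm = (\<lambda>i j. if i = j then 1 else 0)"

definition diagm :: "ivec \<Rightarrow> imat" where
  "diagm d = (\<lambda>i j. if i = j then d i else 0)"

fun mpow :: "imat \<Rightarrow> nat \<Rightarrow> imat" where
  "mpow A 0 = idm"
| "mpow A (Suc n) = mmult (mpow A n) A"

definition mpoly :: "complex poly \<Rightarrow> imat \<Rightarrow> imat" where
  "mpoly p A = (\<lambda>i j. \<Sum>d\<le>degree p. coeff p d * mpow A d i j)"

definition lower_unitri :: "imat \<Rightarrow> bool" where
  "lower_unitri S \<longleftrightarrow> (\<forall>i j. i < j \<longrightarrow> S i j = 0) \<and> (\<forall>i. S i i = 1)"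

definition linv :: "imat \<Rightarrow> imat" where
  "linv S = (THE T. lower_unitri T \<and> mmult S T = idm)"

definition shiftm :: imat where
  "shiftm = (\<lambda>i j. if j = Suc i then 1 else 0)"

definition pascal :: imat where
  "pascal = (\<lambda>n m. of_nat (n choose m))"

definition chi :: "complex \<Rightarrow> ivec" where
  "chi z = (\<lambda>n. z ^ n)"

definition moment :: "(nat \<Rightarrow> complex) \<Rightarrow> nat \<Rightarrow> complex" where
  "moment w n = (\<Sum>k. of_nat k ^ n * w k)"

definition momentm :: "(nat \<Rightarrow> complex) \<Rightarrow> imat" where
  "momentm w = (\<lambda>n m. moment w (n + m))"

definition trunc_mat :: "imat \<Rightarrow> nat \<Rightarrow> complex mat" where
  "trunc_mat A n = mat n n (\<lambda>(i, j). A i j)"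

definition Pvec :: "imat \<Rightarrow> complex \<Rightarrow> ivec" where
  "Pvec S z = mvmult S (chi z)"

definition Qvec :: "imat \<Rightarrow> (nat \<Rightarrow> complex) \<Rightarrow> complex \<Rightarrow> ivec" where
  "Qvec S w z = (\<lambda>n. \<Sum>k. Pvec S (of_nat k) n * w k / (z - of_nat k))"

definition jacobi :: "imat \<Rightarrow> imat" where
  "jacobi S = mmult (mmult S shiftm) (linv S)"

definition Pim :: "imat \<Rightarrow> imat" where
  "Pim S = mmult (mmult S pascal) (linv S)"

definition Psi :: "imat \<Rightarrow> ivec \<Rightarrow> complex poly \<Rightarrow> imat" where
  "Psi S Hd \<theta> = mmult (mmult (linv (Pim S)) (mpoly \<theta> (jacobi S))) (diagm Hd)"

end

theory Submission
  imports Defs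
begin


definition lband :: "nat \<Rightarrow> imat \<Rightarrow> bool" where
  "lband b A \<longleftrightarrow> (\<forall>i j. i + b < j \<longrightarrow> A i j = 0)"

lemma lbandD: "lband b A \<Longrightarrow> i + b < j \<Longrightarrow> A i j = 0"
  by (simp add: lband_def)

lemma lband_mono: "lband a A \<Longrightarrow> a \<le> b \<Longrightarrow> lband b A"
  by (auto simp: lband_def)

lemma mvmult_fin: assumes "lband b A" "i + b \<le> M"
  shows "mvmult A v i = (\<Sum>k\<le>M. A i k * v k)"
  unfolding mvmult_def
  by (rule suminf_finite) (use assms in \<open>auto simp: lband_def\<close>)

lemma mmult_fin: assumes "lband b A" "i + b \<le> M"
  shows "mmult A B i j = (\<Sum>k\<le>M. A i k * B k j)"
  unfolding mmult_def
  by (rule suminf_finite) (use assms in \<open>auto simp: lband_def\<close>)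

lemma lband_mmult: assumes "lband a A" "lband b B" shows "lband (a + b) (mmult A B)"
  unfolding lband_def
proof (intro allI impI)
  fix i j assume ij: "i + (a + b) < j"
  have "mmult A B i j = (\<Sum>k\<le>i+a. A i k * B k j)" by (rule mmult_fin[OF assms(1)]) simp
  also have "\<dots> = 0" by (rule sum.neutral) (use ij assms(2) in \<open>auto simp: lband_def\<close>)
  finally show "mmult A B i j = 0" .
qed

lemma mmult_assoc: assumes A: "lband a A" and B: "lband b B"
  shows "mmult (mmult A B) C = mmult A (mmult B C)"
proof (intro ext)
  fix i j
  let ?N = "i + a + b"
  have "mmult (mmult A B) C i j = (\<Sum>k\<le>?N. mmult A B i k * C k j)"
    by (rule mmult_fin[OF lband_mmult[OF A B]]) simp
  also have "\<dots> = (\<Sum>k\<le>?N. (\<Sum>l\<le>i+a. A i l * B l k) * C k j)"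
    by (intro sum.cong refl, subst mmult_fin[OF A]) auto
  also have "\<dots> = (\<Sum>l\<le>i+a. A i l * (\<Sum>k\<le>?N. B l k * C k j))"
    by (simp add: sum_distrib_left sum_distrib_right mult.assoc sum.swap[of _ "{..?N}"])
  also have "\<dots> = (\<Sum>l\<le>i+a. A i l * mmult B C l j)"
    by (intro sum.cong refl, subst mmult_fin[OF B, of _ ?N]) auto
  also have "\<dots> = mmult A (mmult B C) i j"
    by (rule mmult_fin[OF A, symmetric]) simp
  finally show "mmult (mmult A B) C i j = mmult A (mmult B C) i j" .
qed

lemma mvmult_as_mmult: "mvmult A v i = mmult A (\<lambda>k _. v k) i j"
  by (simp add: mvmult_def mmult_def)

lemma mvmult_assoc: assumes A: "lband a A" and B: "lband b B"
  shows "mvmult (mmult A B) v = mvmult A (mvmult B v)"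
proof (intro ext)
  fix i
  have "mvmult (mmult A B) v i = mmult A (mmult B (\<lambda>k _. v k)) i 0"
    by (simp add: mvmult_as_mmult[of _ _ _ 0] mmult_assoc[OF A B])
  also have "mmult B (\<lambda>k _. v k) = (\<lambda>l _. mvmult B v l)"
    by (intro ext) (simp add: mvmult_def mmult_def)
  finally show "mvmult (mmult A B) v i = mvmult A (mvmult B v) i"
    by (simp add: mvmult_as_mmult[of _ _ _ 0])
qed

lemma mvmult_scal: assumes "lband b A"
  shows "mvmult A (\<lambda>j. v j * c) i = mvmult A v i * c"
  by (simp add: mvmult_fin[OF assms order_refl] sum_distrib_right mult.assoc)

lemma mvmult_scal2: assumes "lband b A"
  shows "mvmult A (\<lambda>j. c * v j) i = c * mvmult A v i"
  using mvmult_scal[OF assms, of "v" c i] by (simp add: mult.commute)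

lemma mv_sums: assumes A: "lband b A" and f: "\<And>j. f j sums s j"
  shows "(\<lambda>k. mvmult A (\<lambda>j. f j k) i) sums mvmult A s i"
proof -
  have "(\<lambda>k. \<Sum>j\<le>i+b. A i j * f j k) sums (\<Sum>j\<le>i+b. A i j * s j)"
    by (intro sums_sum sums_mult f)
  thus ?thesis by (simp add: mvmult_fin[OF A order_refl])
qed

lemma mvmult_delta: assumes "lband b A"
  shows "mvmult A (\<lambda>j. if j = n then c else 0) i = A i n * c"
  unfolding mvmult_def
  by (subst suminf_finite[of "{n}"]) auto

lemma sd1: "finite A \<Longrightarrow> (\<Sum>k\<in>A. (if i = k then 1 else 0) * (f k::complex)) = (if i \<in> A then f i else 0)"
  by (simp add: if_distrib[of "\<lambda>u. u * _"] cong: if_cong)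
lemma sd2: "finite A \<Longrightarrow> (\<Sum>k\<in>A. f k * (if k = i then 1 else 0) ) = (if i \<in> A then (f i::complex) else 0)"
  by (simp add: if_distrib[of "\<lambda>u. _ * u"] cong: if_cong)

lemma lband_idm: "lband 0 idm" by (simp add: lband_def idm_def)
lemma mvmult_idm: "mvmult idm v = v"
  by (intro ext, subst mvmult_fin[OF lband_idm order_refl]) (simp add: idm_def sd1)
lemma mmult_idm_left: "mmult idm B = B"
  by (intro ext, subst mmult_fin[OF lband_idm order_refl]) (simp add: idm_def sd1)
lemma mmult_idm_right: assumes "lband b A" shows "mmult A idm = A"
proof (intro ext)
  fix i j
  show "mmult A idm i j = A i j"
  proof (cases "j \<le> i + b")
    case True thus ?thesis
      by (subst mmult_fin[OF assms order_refl]) (simp add: idm_def sd2)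
  next
    case False thus ?thesis
      by (subst mmult_fin[OF assms order_refl]) (auto simp: idm_def lbandD[OF assms])
  qed
qed

lemma mmult_diagm: "mmult A (diagm d) i j = A i j * d j"
  unfolding mmult_def diagm_def
  by (subst suminf_finite[of "{j}"]) auto

lemma lu_lband: "lower_unitri S \<Longrightarrow> lband 0 S"
  by (simp add: lower_unitri_def lband_def)



function tinv :: "imat \<Rightarrow> nat \<Rightarrow> nat \<Rightarrow> complex" where
  "tinv S i j = (if i < j then 0 else if i = j then 1 else - (\<Sum>k<i. S i k * tinv S k j))"
  by auto
termination by (relation "measure (\<lambda>(S,i,j). i)") auto

declare tinv.simps[simp del]

lemma lu_row: assumes S: "lower_unitri S" and T: "lband 0 T"
  shows "mmult S T i j = T i j + (\<Sum>k<i. S i k * T k j)"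
proof -
  have "mmult S T i j = (\<Sum>k<Suc i. S i k * T k j)"
    using mmult_fin[OF lu_lband[OF S], of i i] by (simp add: lessThan_Suc_atMost)
  thus ?thesis using S by (simp add: lower_unitri_def)
qed

lemma tinv_lu: "lower_unitri (tinv S)"
  by (simp add: lower_unitri_def tinv.simps)

lemma tinv_right: assumes S: "lower_unitri S" shows "mmult S (tinv S) = idm"
proof (intro ext)
  fix i j
  have e: "mmult S (tinv S) i j = tinv S i j + (\<Sum>k<i. S i k * tinv S k j)"
    by (rule lu_row[OF S lu_lband[OF tinv_lu]])
  show "mmult S (tinv S) i j = idm i j"
  proof (cases "i < j")
    case True
    then show ?thesis using e by (simp add: idm_def tinv.simps)
  next
    case False
    show ?thesis
    proof (cases "i = j")
      case True
      have "(\<Sum>k<i. S i k * tinv S k j) = 0" using True by (intro sum.neutral) (auto simp: tinv.simps)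
      thus ?thesis using e True by (simp add: idm_def tinv.simps)
    next
      case False2: False
      have "tinv S i j = - (\<Sum>k<i. S i k * tinv S k j)"
        using False False2 by (subst tinv.simps) simp
      thus ?thesis using e False False2 by (simp add: idm_def)
    qed
  qed
qed

lemma rinv_unique: assumes S: "lower_unitri S" and T1: "lower_unitri T1" and T2: "lower_unitri T2"
  and e1: "mmult S T1 = idm" and e2: "mmult S T2 = idm"
  shows "T1 = T2"
proof -
  have "\<forall>j. T1 i j = T2 i j" for i
  proof (induction i rule: less_induct)
    case (less i)
    show ?case
    proof
      fix j
      have a: "T1 i j + (\<Sum>k<i. S i k * T1 k j) = idm i j"
        using lu_row[OF S lu_lband[OF T1]] e1 by metis
      have b: "T2 i j + (\<Sum>k<i. S i k * T2 k j) = idm i j"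
        using lu_row[OF S lu_lband[OF T2]] e2 by metis
      have "(\<Sum>k<i. S i k * T1 k j) = (\<Sum>k<i. S i k * T2 k j)"
        using less by (intro sum.cong) auto
      thus "T1 i j = T2 i j" using a b by (metis add_right_cancel)
    qed
  qed
  thus ?thesis by blast
qed

lemma linv_props: assumes S: "lower_unitri S"
  shows "lower_unitri (linv S)" "mmult S (linv S) = idm"
proof -
  have "lower_unitri (linv S) \<and> mmult S (linv S) = idm"
    unfolding linv_def
    by (rule theI[of _ "tinv S"]) (use tinv_lu tinv_right[OF S] rinv_unique[OF S] in blast)+
  thus "lower_unitri (linv S)" "mmult S (linv S) = idm" by auto
qed

lemma linv_left: assumes S: "lower_unitri S" shows "mmult (linv S) S = idm"
proof -
  let ?T = "linv S" let ?U = "linv ?T"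
  have T: "lower_unitri ?T" "mmult S ?T = idm" using linv_props[OF S] by auto
  have U: "lower_unitri ?U" "mmult ?T ?U = idm" using linv_props[OF T(1)] by auto
  have "S = mmult S (mmult ?T ?U)" using U(2) mmult_idm_right[OF lu_lband[OF S]] by simp
  also have "\<dots> = mmult (mmult S ?T) ?U" using mmult_assoc[OF lu_lband[OF S] lu_lband[OF T(1)]] by simp
  also have "\<dots> = ?U" using T(2) mmult_idm_left by simp
  finally show ?thesis using U(2) by simp
qed

lemma lu_mmult: assumes A: "lower_unitri A" and B: "lower_unitri B"
  shows "lower_unitri (mmult A B)"
proof -
  have "lband 0 (mmult A B)" using lband_mmult[OF lu_lband[OF A] lu_lband[OF B]] by simp
  moreover have "mmult A B i i = 1" for i
  proof -
    have "mmult A B i i = B i i + (\<Sum>k<i. A i k * B k i)"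
      by (rule lu_row[OF A lu_lband[OF B]])
    also have "(\<Sum>k<i. A i k * B k i) = 0" using B by (intro sum.neutral) (auto simp: lower_unitri_def)
    finally show ?thesis using B by (simp add: lower_unitri_def)
  qed
  ultimately show ?thesis by (simp add: lower_unitri_def lband_def)
qed

lemma lu_pascal: "lower_unitri pascal"
  by (simp add: lower_unitri_def pascal_def)

lemma lband_shift: "lband 1 shiftm" by (simp add: lband_def shiftm_def)

lemma lband_mpow: "lband 1 M \<Longrightarrow> lband d (mpow M d)"
proof (induction d)
  case 0 then show ?case using lband_idm by simp
next
  case (Suc d) then show ?case using lband_mmult[of d "mpow M d" 1 M] by simp
qed

lemma lband_mpoly: assumes "lband 1 M" shows "lband (degree p) (mpoly p M)"
  unfolding lband_def mpoly_def
proof (intro allI impI)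
  fix i j assume "i + degree p < j"
  thus "(\<Sum>d\<le>degree p. coeff p d * mpow M d i j) = 0"
    by (intro sum.neutral) (auto intro!: lbandD[OF lband_mpow[OF assms]])
qed

lemma mpow_eigen: assumes M: "lband 1 M" and v: "mvmult M v = (\<lambda>i. x * v i)"
  shows "mvmult (mpow M d) v = (\<lambda>i. x ^ d * v i)"
proof (induction d)
  case 0 then show ?case by (simp add: mvmult_idm)
next
  case (Suc d)
  have "mvmult (mpow M (Suc d)) v = mvmult (mpow M d) (mvmult M v)"
    using mvmult_assoc[OF lband_mpow[OF M] M] by simp
  also have "\<dots> = (\<lambda>i. x * mvmult (mpow M d) v i)"
    unfolding v by (intro ext mvmult_scal2[OF lband_mpow[OF M]])
  finally show ?case using Suc by (simp add: mult_ac)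
qed

lemma mpoly_eigen: assumes M: "lband 1 M" and v: "mvmult M v = (\<lambda>i. x * v i)"
  shows "mvmult (mpoly p M) v = (\<lambda>i. poly p x * v i)"
proof (intro ext)
  fix i
  let ?N = "i + degree p"
  have "mvmult (mpoly p M) v i = (\<Sum>k\<le>?N. (\<Sum>d\<le>degree p. coeff p d * mpow M d i k) * v k)"
    by (subst mvmult_fin[OF lband_mpoly[OF M] order_refl]) (simp add: mpoly_def)
  also have "\<dots> = (\<Sum>d\<le>degree p. coeff p d * (\<Sum>k\<le>?N. mpow M d i k * v k))"
    by (simp add: sum_distrib_left sum_distrib_right mult.assoc sum.swap[of _ "{..?N}"])
  also have "\<dots> = (\<Sum>d\<le>degree p. coeff p d * mvmult (mpow M d) v i)"
    by (intro sum.cong refl) (simp add: mvmult_fin[OF lband_mpow[OF M], where M="?N"])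
  also have "\<dots> = (\<Sum>d\<le>degree p. coeff p d * x ^ d) * v i"
    by (simp add: mpow_eigen[OF M v] sum_distrib_right mult.assoc)
  also have "\<dots> = poly p x * v i" by (simp add: poly_altdef mult.commute)
  finally show "mvmult (mpoly p M) v i = poly p x * v i" .
qed



context fixes S :: imat assumes S: "lower_unitri S"
begin

lemma Pvec_fin: "Pvec S x n = (\<Sum>j\<le>n. S n j * x ^ j)"
  unfolding Pvec_def chi_def by (subst mvmult_fin[OF lu_lband[OF S]]) auto

lemma P_inv: "mvmult (linv S) (Pvec S x) = chi x"
  unfolding Pvec_def
  using mvmult_assoc[OF lu_lband[OF linv_props(1)[OF S]] lu_lband[OF S], of "chi x"]
  by (simp add: linv_left[OF S] mvmult_idm)

lemma lband_jacobi: "lband 1 (jacobi S)"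
  unfolding jacobi_def
  using lband_mmult[OF lband_mmult[OF lu_lband[OF S] lband_shift] lu_lband[OF linv_props(1)[OF S]]]
  by simp

lemma shift_chi: "mvmult shiftm (chi x) = (\<lambda>i. x * chi x i)"
  by (intro ext, subst mvmult_fin[OF lband_shift order_refl])
     (simp add: shiftm_def chi_def if_distrib[of "\<lambda>u. u * _"] cong: if_cong)

lemma mvmult_scalf: "lband b A \<Longrightarrow> mvmult A (\<lambda>j. c * v j) = (\<lambda>i. c * mvmult A v i)"
  by (intro ext mvmult_scal2)

lemma jacobi_P: "mvmult (jacobi S) (Pvec S x) = (\<lambda>i. x * Pvec S x i)"
proof -
  have SL: "lband 1 (mmult S shiftm)" using lband_mmult[OF lu_lband[OF S] lband_shift] by simp
  have "mvmult (jacobi S) (Pvec S x) = mvmult (mmult S shiftm) (chi x)"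
    unfolding jacobi_def using mvmult_assoc[OF SL lu_lband[OF linv_props(1)[OF S]]] P_inv by simp
  also have "\<dots> = mvmult S (\<lambda>i. x * chi x i)"
    using mvmult_assoc[OF lu_lband[OF S] lband_shift] shift_chi by simp
  finally show ?thesis by (simp add: mvmult_scalf[OF lu_lband[OF S]] Pvec_def)
qed

lemma pascal_chi: "mvmult pascal (chi x) = chi (x + 1)"
proof (intro ext)
  fix n
  have "mvmult pascal (chi x) n = (\<Sum>m\<le>n. of_nat (n choose m) * x ^ m)"
    by (subst mvmult_fin[OF lu_lband[OF lu_pascal] order_refl]) (simp add: pascal_def chi_def)
  also have "\<dots> = (x + 1) ^ n" by (simp add: binomial_ring mult_ac)
  finally show "mvmult pascal (chi x) n = chi (x + 1) n" by (simp add: chi_def)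
qed

lemma lu_Pim: "lower_unitri (Pim S)"
  unfolding Pim_def by (intro lu_mmult lu_pascal S linv_props(1))

lemma Pim_P: "mvmult (Pim S) (Pvec S x) = Pvec S (x + 1)"
proof -
  have SB: "lband 0 (mmult S pascal)" using lband_mmult[OF lu_lband[OF S] lu_lband[OF lu_pascal]] by simp
  have "mvmult (Pim S) (Pvec S x) = mvmult (mmult S pascal) (chi x)"
    unfolding Pim_def using mvmult_assoc[OF SB lu_lband[OF linv_props(1)[OF S]]] P_inv by simp
  also have "\<dots> = Pvec S (x + 1)"
    using mvmult_assoc[OF lu_lband[OF S] lu_lband[OF lu_pascal]] pascal_chi by (simp add: Pvec_def)
  finally show ?thesis .
qed

lemma Piminv_P: "mvmult (linv (Pim S)) (Pvec S x) = Pvec S (x - 1)"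
proof -
  have "mvmult (linv (Pim S)) (Pvec S x) = mvmult (linv (Pim S)) (mvmult (Pim S) (Pvec S (x - 1)))"
    using Pim_P[of "x - 1"] by simp
  also have "\<dots> = mvmult (mmult (linv (Pim S)) (Pim S)) (Pvec S (x - 1))"
    using mvmult_assoc[OF lu_lband[OF linv_props(1)[OF lu_Pim]] lu_lband[OF lu_Pim]] by simp
  finally show ?thesis by (simp add: linv_left[OF lu_Pim] mvmult_idm)
qed

definition "Am p = mmult (linv (Pim S)) (mpoly p (jacobi S))"
definition "Cm p = mmult (Pim S) (mpoly p (jacobi S))"

lemma lband_Am: "lband (degree p) (Am p)"
  unfolding Am_def using lband_mmult[OF lu_lband[OF linv_props(1)[OF lu_Pim]] lband_mpoly[OF lband_jacobi]] by simp

lemma lband_Cm: "lband (degree p) (Cm p)"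
  unfolding Cm_def using lband_mmult[OF lu_lband[OF lu_Pim] lband_mpoly[OF lband_jacobi]] by simp

lemma Am_P: "mvmult (Am p) (Pvec S x) = (\<lambda>i. poly p x * Pvec S (x - 1) i)"
  unfolding Am_def
  using mvmult_assoc[OF lu_lband[OF linv_props(1)[OF lu_Pim]] lband_mpoly[OF lband_jacobi]]
  by (simp add: mpoly_eigen[OF lband_jacobi jacobi_P] mvmult_scalf[OF lu_lband[OF linv_props(1)[OF lu_Pim]]] Piminv_P)

lemma Cm_P: "mvmult (Cm p) (Pvec S x) = (\<lambda>i. poly p x * Pvec S (x + 1) i)"
  unfolding Cm_def
  using mvmult_assoc[OF lu_lband[OF lu_Pim] lband_mpoly[OF lband_jacobi]]
  by (simp add: mpoly_eigen[OF lband_jacobi jacobi_P] mvmult_scalf[OF lu_lband[OF lu_Pim]] Pim_P)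

end


lemma summ_mono: assumes mom: "\<And>n. summable (\<lambda>k. real k ^ n * norm (w k))"
  shows "summable (\<lambda>k. of_nat k ^ n * w k :: complex)"
  by (rule summable_norm_cancel) (simp add: norm_mult norm_power mom)

lemma summ_monoQ: assumes mom: "\<And>n. summable (\<lambda>k. real k ^ n * norm (w k))"
  shows "summable (\<lambda>k. of_nat k ^ n * (w k / (z - of_nat k)) :: complex)"
proof (rule summable_comparison_test')
  show "summable (\<lambda>k. real k ^ n * norm (w k))" by (rule mom)
  define N where "N = nat \<lceil>norm z\<rceil> + 1"
  show "norm (of_nat k ^ n * (w k / (z - of_nat k))) \<le> real k ^ n * norm (w k)" if "N \<le> k" for k
  proof -
    have "real k \<ge> norm z + 1" using that unfolding N_def by linarith
    moreover have "norm (z - of_nat k) \<ge> real k - norm z"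
      using norm_triangle_ineq2[of "of_nat k" z] by (simp add: norm_minus_commute)
    ultimately have "norm (z - of_nat k) \<ge> 1" by linarith
    hence "norm (w k) / norm (z - of_nat k) \<le> norm (w k) / 1"
      by (intro divide_left_mono) auto
    hence "norm (w k / (z - of_nat k)) \<le> norm (w k)" by (simp add: norm_divide)
    thus ?thesis unfolding norm_mult norm_power norm_of_nat by (rule mult_left_mono) simp
  qed
qed



context
  fixes w :: "nat \<Rightarrow> complex" and S :: imat and Hd :: "nat \<Rightarrow> complex"
  assumes mom: "\<And>n. summable (\<lambda>k. real k ^ n * norm (w k))"
    and S: "lower_unitri S"
    and GB: "momentm w = mmult (mmult (linv S) (diagm Hd)) (mtrans (linv S))"
begin

lemma mono_sums: "(\<lambda>k. of_nat k ^ n * w k) sums moment w n"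
  unfolding moment_def by (rule summable_sums[OF summ_mono[OF mom]])

lemma G_entry: "moment w (i + j) = mvmult (linv S) (\<lambda>a. linv S i a * Hd a) j"
proof -
  have "moment w (i + j) = momentm w i j" by (simp add: momentm_def)
  also have "\<dots> = (\<Sum>a. (linv S i a * Hd a) * linv S j a)"
    unfolding GB mmult_def[of "mmult (linv S) (diagm Hd)"] by (simp add: mmult_diagm mtrans_def)
  also have "\<dots> = mvmult (linv S) (\<lambda>a. linv S i a * Hd a) j"
    by (simp add: mvmult_def mult.commute)
  finally show ?thesis .
qed

lemma SG: "mvmult S (\<lambda>j. moment w (i + j)) m = linv S i m * Hd m"
proof -
  have "mvmult S (\<lambda>j. moment w (i + j)) m = mvmult S (mvmult (linv S) (\<lambda>a. linv S i a * Hd a)) m"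
    by (simp add: G_entry)
  also have "\<dots> = mvmult (mmult S (linv S)) (\<lambda>a. linv S i a * Hd a) m"
    using mvmult_assoc[OF lu_lband[OF S] lu_lband[OF linv_props(1)[OF S]]] by simp
  finally show ?thesis by (simp add: linv_props(2)[OF S] mvmult_idm)
qed

lemma sums1: "(\<lambda>k. Pvec S (of_nat k) m * (of_nat k ^ i * w k)) sums (linv S i m * Hd m)"
proof -
  have "(\<lambda>k. mvmult S (\<lambda>j. chi (of_nat k) j * (of_nat k ^ i * w k)) m) sums mvmult S (\<lambda>j. moment w (i + j)) m"
    by (rule mv_sums[OF lu_lband[OF S]]) (use mono_sums[of "i + _"] in \<open>simp add: chi_def power_add mult_ac\<close>)
  thus ?thesis by (simp add: SG mvmult_scal[OF lu_lband[OF S]] Pvec_def)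
qed

lemma orth: "(\<lambda>k. Pvec S (of_nat k) n * (Pvec S (of_nat k) m * w k)) sums (if n = m then Hd m else 0)"
proof -
  have "(\<lambda>k. mvmult S (\<lambda>i. chi (of_nat k) i * (Pvec S (of_nat k) m * w k)) n) sums mvmult S (\<lambda>i. linv S i m * Hd m) n"
    by (rule mv_sums[OF lu_lband[OF S]]) (use sums1 in \<open>simp add: chi_def mult_ac\<close>)
  moreover have "mvmult S (\<lambda>i. linv S i m) n = mmult S (linv S) n m"
    by (simp add: mvmult_def mmult_def)
  hence "mvmult S (\<lambda>i. linv S i m * Hd m) n = (if n = m then Hd m else 0)"
    by (simp add: mvmult_scal[OF lu_lband[OF S]] linv_props(2)[OF S] idm_def)
  moreover have "(\<lambda>k. mvmult S (\<lambda>i. chi (of_nat k) i * (Pvec S (of_nat k) m * w k)) n)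
     = (\<lambda>k. Pvec S (of_nat k) n * (Pvec S (of_nat k) m * w k))"
    by (simp add: mvmult_scal[OF lu_lband[OF S]] Pvec_def)
  ultimately show ?thesis by simp
qed

lemma Qsums: "(\<lambda>k. Pvec S (of_nat k) n * (w k / (z - of_nat k))) sums Qvec S w z n"
proof -
  have "(\<lambda>k. mvmult S (\<lambda>j. chi (of_nat k) j * (w k / (z - of_nat k))) n) sums
        mvmult S (\<lambda>j. \<Sum>k. of_nat k ^ j * (w k / (z - of_nat k))) n"
    by (rule mv_sums[OF lu_lband[OF S]]) (use summ_monoQ[OF mom] in \<open>simp add: chi_def summable_sums\<close>)
  moreover have "(\<lambda>k. mvmult S (\<lambda>j. chi (of_nat k) j * (w k / (z - of_nat k))) n)
     = (\<lambda>k. Pvec S (of_nat k) n * (w k / (z - of_nat k)))"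
    by (simp only: mvmult_scal[OF lu_lband[OF S]] Pvec_def)
  ultimately have "summable (\<lambda>k. Pvec S (of_nat k) n * (w k / (z - of_nat k)))"
    by (simp only: sums_summable)
  thus ?thesis unfolding Qvec_def by (simp add: summable_sums)
qed

end


lemma Hd_nz:
  fixes w :: "nat \<Rightarrow> complex" and S :: imat and Hd :: "nat \<Rightarrow> complex"
  assumes mom: "\<And>n. summable (\<lambda>k. real k ^ n * norm (w k))"
    and S: "lower_unitri S"
    and GB: "momentm w = mmult (mmult (linv S) (diagm Hd)) (mtrans (linv S))"
    and minors: "\<And>n. det (trunc_mat (momentm w) n) \<noteq> 0"
  shows "Hd m \<noteq> 0"
proof
  assume H0: "Hd m = 0"
  let ?N = "Suc m"
  let ?A = "trunc_mat (momentm w) ?N"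
  let ?u = "vec ?N (\<lambda>j. S m j)"
  have A: "?A \<in> carrier_mat ?N ?N" by (simp add: trunc_mat_def)
  have u: "?u \<in> carrier_vec ?N" by simp
  have u0: "?u \<noteq> 0\<^sub>v ?N"
  proof
    assume "?u = 0\<^sub>v ?N"
    hence "?u $ m = 0\<^sub>v ?N $ m" by simp
    thus False using S by (simp add: lower_unitri_def)
  qed
  have "?A *\<^sub>v ?u = 0\<^sub>v ?N"
  proof (rule eq_vecI)
    fix i assume i: "i < dim_vec (0\<^sub>v ?N :: complex vec)"
    have "(?A *\<^sub>v ?u) $ i = (\<Sum>j<?N. moment w (i + j) * S m j)"
      using i by (simp add: trunc_mat_def mult_mat_vec_def scalar_prod_def momentm_def atLeast0LessThan)
    also have "\<dots> = mvmult S (\<lambda>j. moment w (i + j)) m"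
      by (subst mvmult_fin[OF lu_lband[OF S] order_refl]) (simp add: lessThan_Suc_atMost mult.commute)
    also have "\<dots> = 0" using SG[OF mom S GB] H0 by simp
    finally show "(?A *\<^sub>v ?u) $ i = 0\<^sub>v ?N $ i" using i by simp
  qed (simp add: trunc_mat_def)
  hence "det ?A = 0" using det_0_iff_vec_prod_zero[OF A] u u0 by blast
  thus False using minors by blast
qed


lemma alg1: "a * (p * (w / d)) - b * (p * (w / d)) = p * ((a - b) / d) * (w::complex)"
  by (simp add: divide_inverse right_diff_distrib left_diff_distrib mult_ac)


theorem mainTheorem7:
  fixes w :: "nat \<Rightarrow> complex" and \<theta> \<sigma> :: "complex poly"
    and S :: "nat \<Rightarrow> nat \<Rightarrow> complex" and Hd :: "nat \<Rightarrow> complex" and z :: complex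
  assumes mom: "\<And>n. summable (\<lambda>k. real k ^ n * norm (w k))"
    and minors: "\<And>n. det (trunc_mat (momentm w) n) \<noteq> 0"
    and S: "lower_unitri S"
    and GB: "momentm w = mmult (mmult (linv S) (diagm Hd)) (mtrans (linv S))"
    and pearson: "\<And>k. poly \<theta> (of_nat (Suc k)) * w (Suc k) = poly \<sigma> (of_nat k) * w k"
    and theta0: "poly \<theta> 0 = 0"
    and z: "z \<notin> \<int>"
  shows "((\<lambda>n. poly \<theta> z * Qvec S w z n
              - (\<Sum>m. Psi S Hd \<theta> m n / Hd m * Qvec S w (z - 1) m))
         = (\<lambda>n. \<Sum>k. Pvec S (of_nat k) n * ((poly \<theta> z - poly \<theta> (of_nat k)) / (z - of_nat k)) * w k))
       \<and> ((\<lambda>n. poly \<sigma> z * Qvec S w z n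
              - (\<Sum>m. Psi S Hd \<theta> n m / Hd m * Qvec S w (z + 1) m))
         = (\<lambda>n. \<Sum>k. Pvec S (of_nat k) n * ((poly \<sigma> z - poly \<sigma> (of_nat k)) / (z - of_nat k)) * w k))"
proof -
  let ?P = "\<lambda>x. Pvec S x"
  let ?A = "Am S \<theta>" and ?C = "Cm S \<sigma>"
  have pe: "poly \<theta> (of_nat k + 1) * w (Suc k) = poly \<sigma> (of_nat k) * w k" for k
    using pearson[of k] by (simp add: add.commute)
  have HdZ: "Hd m \<noteq> 0" for m by (rule Hd_nz[OF mom S GB minors])
  have Psi_eq: "Psi S Hd \<theta> i j = ?A i j * Hd j" for i j
    by (simp add: Psi_def Am_def[OF S] mmult_diagm)
  have orth': "\<And>j n. (\<lambda>k. ?P (of_nat k) j * (?P (of_nat k) n * w k)) sums (if j = n then Hd n else 0)"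
    by (rule orth[OF mom S GB])
  have LF: "?A m n * Hd n = ?C n m * Hd m" for m n
  proof -
    define g where "g k = poly \<theta> (of_nat k) * ?P (of_nat k - 1) m * (?P (of_nat k) n * w k)" for k
    have "(\<lambda>k. mvmult ?A (\<lambda>j. ?P (of_nat k) j * (?P (of_nat k) n * w k)) m) sums
          mvmult ?A (\<lambda>j. if j = n then Hd n else 0) m"
      by (rule mv_sums[OF lband_Am[OF S]]) (rule orth')
    moreover have "(\<lambda>k. mvmult ?A (\<lambda>j. ?P (of_nat k) j * (?P (of_nat k) n * w k)) m) = g"
      by (intro ext) (simp add: mvmult_scal[OF lband_Am[OF S]] Am_P[OF S] g_def)
    ultimately have "g sums (?A m n * Hd n)" by (simp add: mvmult_delta[OF lband_Am[OF S]])
    moreover have "g 0 = 0" by (simp add: g_def theta0)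
    ultimately have g1: "(\<lambda>k. g (Suc k)) sums (?A m n * Hd n)" by (simp add: sums_Suc_iff)
    have "(\<lambda>k. mvmult ?C (\<lambda>j. ?P (of_nat k) j * (?P (of_nat k) m * w k)) n) sums
          mvmult ?C (\<lambda>j. if j = m then Hd m else 0) n"
      by (rule mv_sums[OF lband_Cm[OF S]]) (rule orth')
    moreover have "(\<lambda>k. mvmult ?C (\<lambda>j. ?P (of_nat k) j * (?P (of_nat k) m * w k)) n) = (\<lambda>k. g (Suc k))"
    proof (intro ext)
      fix k
      have "g (Suc k) = (poly \<theta> (of_nat k + 1) * w (Suc k)) * ?P (of_nat k) m * ?P (of_nat k + 1) n"
        by (simp add: g_def mult_ac add.commute)
      also have "\<dots> = poly \<sigma> (of_nat k) * w k * ?P (of_nat k) m * ?P (of_nat k + 1) n"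
        by (simp only: pe)
      finally show "mvmult ?C (\<lambda>j. ?P (of_nat k) j * (?P (of_nat k) m * w k)) n = g (Suc k)"
        by (simp only: mvmult_scal[OF lband_Cm[OF S]] Cm_P[OF S]) (simp add: mult_ac add.commute)
    qed
    ultimately have "(\<lambda>k. g (Suc k)) sums (?C n m * Hd m)" by (simp add: mvmult_delta[OF lband_Cm[OF S]])
    with g1 show ?thesis using sums_unique2 by blast
  qed
  have Q: "\<And>n x. (\<lambda>k. ?P (of_nat k) n * (w k / (x - of_nat k))) sums Qvec S w x n"
    by (rule Qsums[OF mom S GB])
  have part1: "poly \<theta> z * Qvec S w z n - (\<Sum>m. Psi S Hd \<theta> m n / Hd m * Qvec S w (z - 1) m)
     = (\<Sum>k. ?P (of_nat k) n * ((poly \<theta> z - poly \<theta> (of_nat k)) / (z - of_nat k)) * w k)" for n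
  proof -
    have "(\<lambda>m. Psi S Hd \<theta> m n / Hd m * Qvec S w (z - 1) m) = (\<lambda>m. ?C n m * Qvec S w (z - 1) m)"
      by (intro ext) (simp add: Psi_eq LF HdZ)
    hence e1: "(\<Sum>m. Psi S Hd \<theta> m n / Hd m * Qvec S w (z - 1) m) = mvmult ?C (Qvec S w (z - 1)) n"
      by (simp add: mvmult_def)
    define h where "h k = poly \<theta> (of_nat k) * (?P (of_nat k) n * (w k / (z - of_nat k)))" for k
    have "(\<lambda>k. mvmult ?C (\<lambda>j. ?P (of_nat k) j * (w k / (z - 1 - of_nat k))) n) sums mvmult ?C (Qvec S w (z - 1)) n"
      by (rule mv_sums[OF lband_Cm[OF S]]) (rule Q)
    moreover have "(\<lambda>k. mvmult ?C (\<lambda>j. ?P (of_nat k) j * (w k / (z - 1 - of_nat k))) n) = (\<lambda>k. h (Suc k))"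
    proof (intro ext)
      fix k
      have "h (Suc k) = (poly \<theta> (of_nat k + 1) * w (Suc k)) * ?P (of_nat k + 1) n / (z - 1 - of_nat k)"
        by (simp add: h_def algebra_simps add.commute)
      also have "\<dots> = poly \<sigma> (of_nat k) * w k * ?P (of_nat k + 1) n / (z - 1 - of_nat k)"
        by (simp only: pe)
      finally show "mvmult ?C (\<lambda>j. ?P (of_nat k) j * (w k / (z - 1 - of_nat k))) n = h (Suc k)"
        by (simp only: mvmult_scal[OF lband_Cm[OF S]] Cm_P[OF S]) (simp add: mult_ac add.commute)
    qed
    ultimately have "(\<lambda>k. h (Suc k)) sums mvmult ?C (Qvec S w (z - 1)) n" by simp
    moreover have "h 0 = 0" by (simp add: h_def theta0)
    ultimately have hs: "h sums mvmult ?C (Qvec S w (z - 1)) n" by (simp add: sums_Suc_iff)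
    have fs: "(\<lambda>k. poly \<theta> z * (?P (of_nat k) n * (w k / (z - of_nat k))) - h k) sums
          (poly \<theta> z * Qvec S w z n - mvmult ?C (Qvec S w (z - 1)) n)"
      by (intro sums_diff sums_mult Q hs)
    have fe: "(\<lambda>k. poly \<theta> z * (?P (of_nat k) n * (w k / (z - of_nat k))) - h k) =
       (\<lambda>k. ?P (of_nat k) n * ((poly \<theta> z - poly \<theta> (of_nat k)) / (z - of_nat k)) * w k)"
      by (intro ext) (simp only: h_def alg1)
    from sums_unique[OF fs[unfolded fe]] e1 show ?thesis by simp
  qed
  have part2: "poly \<sigma> z * Qvec S w z n - (\<Sum>m. Psi S Hd \<theta> n m / Hd m * Qvec S w (z + 1) m)
     = (\<Sum>k. ?P (of_nat k) n * ((poly \<sigma> z - poly \<sigma> (of_nat k)) / (z - of_nat k)) * w k)" for n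
  proof -
    have "(\<lambda>m. Psi S Hd \<theta> n m / Hd m * Qvec S w (z + 1) m) = (\<lambda>m. ?A n m * Qvec S w (z + 1) m)"
      by (intro ext) (simp add: Psi_eq HdZ)
    hence e1: "(\<Sum>m. Psi S Hd \<theta> n m / Hd m * Qvec S w (z + 1) m) = mvmult ?A (Qvec S w (z + 1)) n"
      by (simp add: mvmult_def)
    define g where "g k = poly \<theta> (of_nat k) * ?P (of_nat k - 1) n * (w k / (z + 1 - of_nat k))" for k
    define h where "h k = poly \<sigma> (of_nat k) * (?P (of_nat k) n * (w k / (z - of_nat k)))" for k
    have "(\<lambda>k. mvmult ?A (\<lambda>j. ?P (of_nat k) j * (w k / (z + 1 - of_nat k))) n) sums mvmult ?A (Qvec S w (z + 1)) n"
      by (rule mv_sums[OF lband_Am[OF S]]) (rule Q)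
    moreover have "(\<lambda>k. mvmult ?A (\<lambda>j. ?P (of_nat k) j * (w k / (z + 1 - of_nat k))) n) = g"
      by (intro ext) (simp only: mvmult_scal[OF lband_Am[OF S]] Am_P[OF S] g_def)
    ultimately have "g sums mvmult ?A (Qvec S w (z + 1)) n" by simp
    moreover have "g 0 = 0" by (simp add: g_def theta0)
    ultimately have g1: "(\<lambda>k. g (Suc k)) sums mvmult ?A (Qvec S w (z + 1)) n" by (simp add: sums_Suc_iff)
    have "(\<lambda>k. g (Suc k)) = h"
    proof (intro ext)
      fix k
      have "g (Suc k) = (poly \<theta> (of_nat k + 1) * w (Suc k)) * ?P (of_nat k) n / (z - of_nat k)"
        by (simp add: g_def algebra_simps add.commute)
      also have "\<dots> = poly \<sigma> (of_nat k) * w k * ?P (of_nat k) n / (z - of_nat k)"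
        by (simp only: pe)
      finally show "g (Suc k) = h k" by (simp add: h_def mult_ac)
    qed
    with g1 have hs: "h sums mvmult ?A (Qvec S w (z + 1)) n" by simp
    have fs: "(\<lambda>k. poly \<sigma> z * (?P (of_nat k) n * (w k / (z - of_nat k))) - h k) sums
          (poly \<sigma> z * Qvec S w z n - mvmult ?A (Qvec S w (z + 1)) n)"
      by (intro sums_diff sums_mult Q hs)
    have fe: "(\<lambda>k. poly \<sigma> z * (?P (of_nat k) n * (w k / (z - of_nat k))) - h k) =
       (\<lambda>k. ?P (of_nat k) n * ((poly \<sigma> z - poly \<sigma> (of_nat k)) / (z - of_nat k)) * w k)"
      by (intro ext) (simp only: h_def alg1)
    from sums_unique[OF fs[unfolded fe]] e1 show ?thesis by simp
  qed
  show ?thesis using part1 part2 by auto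
qed


end
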